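(* If $Z\subseteq A^+$ is a regular language which is a strong alt-induced code, then there are only finitely many strong alternative codes $(X,Y)$ with $XY=Z$.
   Context: $A$ is a finite alphabet, $A^*$ the set of words, $A^+$ the non-empty words, $XY=\{xy:x\in X,y\in Y\}$. For $X,Z\subseteq A^*$: $X^{-1}Z=\{u\in A^*: xu\in Z \text{ for some } x\in X\}$, $ZY^{-1}=\{u\in A^*: uy\in Z\text{ for some } y\in Y\}$. A code is a subset of $A^+$ in which every word has at most one factorization into its elements. For non-empty $X,Y\subseteq A^+$, $(X,Y)$ is an alternative code if $XY$ is a code and each element of $XY$ has exactly one factorization $xy$ with $x\in X,y\in Y$ (equivalently, no word admits two different similar alternative factorizations on $(X,Y)$). It is a strong alternative code if moreover $X^{-1}(XY)\subseteq Y$ and $(XY)Y^{-1}\subseteq X$. $Z$ is a strong alt-induced code if $Z=XY$ for some strong alternative code $(X,Y)$. *)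

theory Defs
  imports Main
begin

definition conc :: "'a list set \<Rightarrow> 'a list set \<Rightarrow> 'a list set" where
  "conc X Y = {x @ y | x y. x \<in> X \<and> y \<in> Y}"

definition nonempty_words :: "'a list set" where
  "nonempty_words = {w. w \<noteq> []}"

definition lquot :: "'a list set \<Rightarrow> 'a list set \<Rightarrow> 'a list set" where
  "lquot X Z = {u. \<exists>x\<in>X. x @ u \<in> Z}"

definition rquot :: "'a list set \<Rightarrow> 'a list set \<Rightarrow> 'a list set" where
  "rquot Z Y = {u. \<exists>y\<in>Y. u @ y \<in> Z}"

definition code :: "'a list set \<Rightarrow> bool" where
  "code C \<longleftrightarrow> C \<subseteq> nonempty_words \<and>
     (\<forall>xs ys. set xs \<subseteq> C \<longrightarrow> set ys \<subseteq> C \<longrightarrow> concat xs = concat ys \<longrightarrow> xs = ys)"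

definition alt_code :: "'a list set \<Rightarrow> 'a list set \<Rightarrow> bool" where
  "alt_code X Y \<longleftrightarrow> X \<noteq> {} \<and> Y \<noteq> {} \<and> X \<subseteq> nonempty_words \<and> Y \<subseteq> nonempty_words \<and>
     code (conc X Y) \<and>
     (\<forall>x y x' y'. x \<in> X \<longrightarrow> y \<in> Y \<longrightarrow> x' \<in> X \<longrightarrow> y' \<in> Y \<longrightarrow> x @ y = x' @ y'
        \<longrightarrow> x = x' \<and> y = y')"

definition strong_alt_code :: "'a list set \<Rightarrow> 'a list set \<Rightarrow> bool" where
  "strong_alt_code X Y \<longleftrightarrow> alt_code X Y \<and>
     lquot X (conc X Y) \<subseteq> Y \<and> rquot (conc X Y) Y \<subseteq> X"

definition strong_alt_induced :: "'a list set \<Rightarrow> bool" where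
  "strong_alt_induced Z \<longleftrightarrow> (\<exists>X Y. strong_alt_code X Y \<and> Z = conc X Y)"

definition regular :: "'a list set \<Rightarrow> bool" where
  "regular L \<longleftrightarrow> (\<exists>(n::nat) (q0::nat) (delta :: nat \<Rightarrow> 'a \<Rightarrow> nat) (F :: nat set).
      q0 < n \<and> (\<forall>q a. q < n \<longrightarrow> delta q a < n) \<and>
      L = {w. foldl delta q0 w \<in> F})"

end

theory Submission
  imports Defs
begin

lemma foldl_bound: "q < n \<Longrightarrow> (\<forall>q a. q < n \<longrightarrow> delta q a < n) \<Longrightarrow> foldl delta q u < (n::nat)"
  by (induction u arbitrary: q) auto

lemma sac_Y: "strong_alt_code X Y \<Longrightarrow> Y = lquot X (conc X Y)"
proof
  assume s: "strong_alt_code X Y"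
  then show "lquot X (conc X Y) \<subseteq> Y" unfolding strong_alt_code_def by blast
  from s obtain x where "x \<in> X" unfolding strong_alt_code_def alt_code_def by blast
  then show "Y \<subseteq> lquot X (conc X Y)" unfolding lquot_def conc_def by blast
qed

lemma sac_X: "strong_alt_code X Y \<Longrightarrow> X = rquot (conc X Y) Y"
proof
  assume s: "strong_alt_code X Y"
  then show "rquot (conc X Y) Y \<subseteq> X" unfolding strong_alt_code_def by blast
  from s obtain y where "y \<in> Y" unfolding strong_alt_code_def alt_code_def by blast
  then show "X \<subseteq> rquot (conc X Y) Y" unfolding rquot_def conc_def by blast
qed

theorem theoremT:
  fixes Z :: "('a::finite) list set"
  assumes "regular Z"
    and "Z \<subseteq> nonempty_words"
    and "strong_alt_induced Z"
  shows "finite {(X, Y). strong_alt_code X Y \<and> conc X Y = Z}"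
proof -
  obtain n q0 delta F where q0: "q0 < (n::nat)" and d: "\<forall>q a. q < n \<longrightarrow> delta q a < n"
    and Z: "Z = {w. foldl delta q0 w \<in> F}"
    using assms(1) unfolding regular_def by blast
  define S where "S q = {w. foldl delta q w \<in> F}" for q
  have lq: "lquot X Z = \<Union> (S ` ((\<lambda>x. foldl delta q0 x) ` X))" for X
    unfolding lquot_def S_def Z by auto
  have "{(X, Y). strong_alt_code X Y \<and> conc X Y = Z}
      \<subseteq> (\<lambda>Y. (rquot Z Y, Y)) ` ((\<lambda>P. \<Union>(S ` P)) ` Pow {..<n})"
  proof
    fix p assume "p \<in> {(X, Y). strong_alt_code X Y \<and> conc X Y = Z}"
    then obtain X Y where p: "p = (X, Y)" and s: "strong_alt_code X Y" and c: "conc X Y = Z" by blast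
    have Y: "Y = \<Union> (S ` ((\<lambda>x. foldl delta q0 x) ` X))"
      using sac_Y[OF s] c lq by simp
    have X: "X = rquot Z Y" using sac_X[OF s] c by simp
    have "(\<lambda>x. foldl delta q0 x) ` X \<in> Pow {..<n}"
      using foldl_bound[OF q0 d] by auto
    then show "p \<in> (\<lambda>Y. (rquot Z Y, Y)) ` ((\<lambda>P. \<Union>(S ` P)) ` Pow {..<n})"
      using p X Y by blast
  qed
  then show ?thesis by (rule finite_subset) simp
qed

end
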